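(* Let $\mathrm{SL}(2,\mathbb C)$ act on $\mathfrak{sl}(3,\mathbb C)$ by $g\cdot M=\iota(g)M\iota(g)^{-1}$, where $\iota(g)=\begin{pmatrix} g&0\\0&1\end{pmatrix}$, and on $\mathbb C[\mathfrak{sl}(3)]$ by $(g\cdot f)(M)=f(g^{-1}\cdot M)$. Define $$\mathcal I_1=h_0,\quad \mathcal I_2=h_1^2+4x_1y_1,\quad \mathcal I_3=x_2y_2+x_3y_3,$$ $$\mathcal I_4=h_1y_2y_3+y_1y_2^2-x_1y_3^2,\quad \mathcal I_5=h_1x_2x_3+x_1x_2^2-x_3^2y_1,$$ $$\mathcal I_6=h_1(x_2y_2-x_3y_3)-2(y_1y_2x_3+x_1x_2y_3).$$ Then each $\mathcal I_i$ is $\mathrm{SL}(2)$-invariant, and $\mathcal I_1,\dots,\mathcal I_6$ generate the invariant ring: $\mathbb C[\mathfrak{sl}(3)]^{\mathrm{SL}(2)}=\mathbb C[\mathcal I_1,\dots,\mathcal I_6]$.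
   Context: For $M=(m_{ij})\in\mathfrak{sl}(3,\mathbb C)$ (traceless $3\times 3$ complex matrices) define the linear coordinate functions $x_1=m_{12}$, $y_1=m_{21}$, $x_2=m_{23}$, $y_2=m_{32}$, $x_3=m_{13}$, $y_3=m_{31}$, $h_1=m_{11}-m_{22}$, and $h_0=\tfrac12(m_{11}+m_{22})-m_{33}$. These eight functions form a basis of the dual space of $\mathfrak{sl}(3,\mathbb C)$, so $\mathbb C[\mathfrak{sl}(3)]$ is the polynomial ring in them. *)

theory Defs
  imports "HOL-Analysis.Analysis"
begin

definition minv :: "'a::comm_ring_1^'n^'n \<Rightarrow> 'a^'n^'n" where
  "minv A = (THE B. A ** B = mat 1 \<and> B ** A = mat 1)"

definition sl3 :: "(complex^3^3) set" where
  "sl3 = {M. trace M = 0}"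

definition SL2 :: "(complex^2^2) set" where
  "SL2 = {g. det g = 1}"

definition iota :: "complex^2^2 \<Rightarrow> complex^3^3" where
  "iota g = vector [vector [g$1$1, g$1$2, 0],
                    vector [g$2$1, g$2$2, 0],
                    vector [0, 0, 1]]"

definition act :: "complex^2^2 \<Rightarrow> complex^3^3 \<Rightarrow> complex^3^3" where
  "act g M = iota g ** M ** minv (iota g)"

definition act_fun :: "complex^2^2 \<Rightarrow> (complex^3^3 \<Rightarrow> complex) \<Rightarrow> (complex^3^3 \<Rightarrow> complex)" where
  "act_fun g f = (\<lambda>M. f (act (minv g) M))"

inductive polyfun :: "nat \<Rightarrow> ((nat \<Rightarrow> complex) \<Rightarrow> complex) \<Rightarrow> bool" for n where
  pconst: "polyfun n (\<lambda>v. c)"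
| pvar: "i < n \<Longrightarrow> polyfun n (\<lambda>v. v i)"
| padd: "polyfun n p \<Longrightarrow> polyfun n q \<Longrightarrow> polyfun n (\<lambda>v. p v + q v)"
| pmult: "polyfun n p \<Longrightarrow> polyfun n q \<Longrightarrow> polyfun n (\<lambda>v. p v * q v)"

definition x1 :: "complex^3^3 \<Rightarrow> complex" where "x1 M = M$1$2"
definition y1 :: "complex^3^3 \<Rightarrow> complex" where "y1 M = M$2$1"
definition x2 :: "complex^3^3 \<Rightarrow> complex" where "x2 M = M$2$3"
definition y2 :: "complex^3^3 \<Rightarrow> complex" where "y2 M = M$3$2"
definition x3 :: "complex^3^3 \<Rightarrow> complex" where "x3 M = M$1$3"
definition y3 :: "complex^3^3 \<Rightarrow> complex" where "y3 M = M$3$1"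
definition h1 :: "complex^3^3 \<Rightarrow> complex" where "h1 M = M$1$1 - M$2$2"
definition h0 :: "complex^3^3 \<Rightarrow> complex" where "h0 M = (M$1$1 + M$2$2) / 2 - M$3$3"

definition coords :: "complex^3^3 \<Rightarrow> nat \<Rightarrow> complex" where
  "coords M = (\<lambda>i. [x1 M, y1 M, x2 M, y2 M, x3 M, y3 M, h1 M, h0 M] ! i)"

definition poly_sl3 :: "(complex^3^3 \<Rightarrow> complex) \<Rightarrow> bool" where
  "poly_sl3 f \<longleftrightarrow> (\<exists>p. polyfun 8 p \<and> (\<forall>M\<in>sl3. f M = p (coords M)))"

definition invariant :: "(complex^3^3 \<Rightarrow> complex) \<Rightarrow> bool" where
  "invariant f \<longleftrightarrow> (\<forall>g\<in>SL2. \<forall>M\<in>sl3. act_fun g f M = f M)"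

definition I1 :: "complex^3^3 \<Rightarrow> complex" where "I1 M = h0 M"
definition I2 :: "complex^3^3 \<Rightarrow> complex" where "I2 M = h1 M ^ 2 + 4 * x1 M * y1 M"
definition I3 :: "complex^3^3 \<Rightarrow> complex" where "I3 M = x2 M * y2 M + x3 M * y3 M"
definition I4 :: "complex^3^3 \<Rightarrow> complex" where
  "I4 M = h1 M * y2 M * y3 M + y1 M * y2 M ^ 2 - x1 M * y3 M ^ 2"
definition I5 :: "complex^3^3 \<Rightarrow> complex" where
  "I5 M = h1 M * x2 M * x3 M + x1 M * x2 M ^ 2 - x3 M ^ 2 * y1 M"
definition I6 :: "complex^3^3 \<Rightarrow> complex" where
  "I6 M = h1 M * (x2 M * y2 M - x3 M * y3 M) - 2 * (y1 M * y2 M * x3 M + x1 M * x2 M * y3 M)"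

definition Ivec :: "complex^3^3 \<Rightarrow> nat \<Rightarrow> complex" where
  "Ivec M = (\<lambda>i. [I1 M, I2 M, I3 M, I4 M, I5 M, I6 M] ! i)"

end

theory Submission
  imports Defs "HOL-Computational_Algebra.Polynomial"
begin


definition adj2 :: "complex^2^2 \<Rightarrow> complex^2^2" where
  "adj2 g = vector [vector [g$2$2, - g$1$2], vector [- g$2$1, g$1$1]]"

lemma minv_eq:
  fixes A B :: "'a::comm_ring_1^'n^'n"
  assumes "A ** B = mat 1" "B ** A = mat 1"
  shows "minv A = B"
  unfolding minv_def
proof (rule the_equality)
  show "A ** B = mat 1 \<and> B ** A = mat 1" using assms by simp
  fix C assume "A ** C = mat 1 \<and> C ** A = mat 1"
  then have "C = C ** (A ** B)" "C ** A = mat 1" using assms by auto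
  then show "C = B" by (simp add: matrix_mul_assoc)
qed

lemma m3: "(vector [vector [a11,a12,a13], vector [a21,a22,a23], vector [a31,a32,a33]] :: 'a::{comm_ring_1}^3^3)
 ** (vector [vector [b11,b12,b13], vector [b21,b22,b23], vector [b31,b32,b33]] :: 'a^3^3) =
 vector [vector [a11*b11+a12*b21+a13*b31, a11*b12+a12*b22+a13*b32, a11*b13+a12*b23+a13*b33],
         vector [a21*b11+a22*b21+a23*b31, a21*b12+a22*b22+a23*b32, a21*b13+a22*b23+a23*b33],
         vector [a31*b11+a32*b21+a33*b31, a31*b12+a32*b22+a33*b32, a31*b13+a32*b23+a33*b33]]"
  unfolding vec_eq_iff matrix_matrix_mult_def by (simp add: forall_3 sum_3)

lemma mat1_3: "(mat 1 :: 'a::comm_ring_1^3^3) = vector [vector [1,0,0], vector [0,1,0], vector [0,0,1]]"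
  unfolding vec_eq_iff mat_def by (simp add: forall_3)

lemma M3: "(M::'a::comm_ring_1^3^3) = vector [vector [M$1$1,M$1$2,M$1$3], vector [M$2$1,M$2$2,M$2$3], vector [M$3$1,M$3$2,M$3$3]]"
  unfolding vec_eq_iff by (simp add: forall_3)

lemma minv_iota: "det g = 1 \<Longrightarrow> minv (iota g) = iota (adj2 g)"
  apply (rule minv_eq)
  apply (simp_all add: iota_def adj2_def m3 mat1_3 det_2)
  apply (simp_all add: algebra_simps)
  done

lemma act_explicit: assumes "det g = 1"
  shows "act g M = iota g ** (vector [vector [M$1$1,M$1$2,M$1$3], vector [M$2$1,M$2$2,M$2$3], vector [M$3$1,M$3$2,M$3$3]]) ** iota (adj2 g)"
  unfolding act_def minv_iota[OF assms] by (subst M3[of M], rule refl)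

lemmas act_simps = act_explicit iota_def adj2_def m3 x1_def y1_def x2_def y2_def x3_def y3_def h1_def h0_def

lemma tr3: "trace (M::complex^3^3) = M$1$1 + M$2$2 + M$3$3" by (simp add: trace_def sum_3)

lemma I1_act: "det g = 1 \<Longrightarrow> I1 (act g M) = I1 M"
  apply (simp add: act_simps I1_def det_2)
  by algebra
lemma I2_act: "det g = 1 \<Longrightarrow> I2 (act g M) = I2 M"
  apply (simp add: act_simps I2_def det_2)
  by algebra
lemma I3_act: "det g = 1 \<Longrightarrow> I3 (act g M) = I3 M"
  apply (simp add: act_simps I3_def det_2)
  by algebra
lemma I4_act: "det g = 1 \<Longrightarrow> I4 (act g M) = I4 M"
  apply (simp add: act_simps I4_def det_2)
  by algebra
lemma I5_act: "det g = 1 \<Longrightarrow> I5 (act g M) = I5 M"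
  apply (simp add: act_simps I5_def det_2)
  by algebra
lemma I6_act: "det g = 1 \<Longrightarrow> I6 (act g M) = I6 M"
  apply (simp add: act_simps I6_def det_2)
  by algebra


lemmas pf_const = polyfun.pconst
lemmas pf_var = polyfun.pvar
lemmas pf_add = polyfun.padd
lemmas pf_mult = polyfun.pmult

lemma pf_neg: "polyfun n p \<Longrightarrow> polyfun n (\<lambda>v. - p v)"
proof -
  assume "polyfun n p"
  then have "polyfun n (\<lambda>v. (\<lambda>v. -1) v * p v)" by (intro pf_mult pf_const)
  then show ?thesis by simp
qed

lemma pf_diff: "polyfun n p \<Longrightarrow> polyfun n q \<Longrightarrow> polyfun n (\<lambda>v. p v - q v)"
  using pf_add[OF _ pf_neg, of n p q] by simp

lemma pf_pow: "polyfun n p \<Longrightarrow> polyfun n (\<lambda>v. p v ^ k)"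
proof (induction k)
  case 0 then show ?case using pf_const[of n 1] by simp
next
  case (Suc k) then show ?case using pf_mult[OF Suc.prems Suc.IH[OF Suc.prems]] by simp
qed

lemma pf_local: "polyfun n p \<Longrightarrow> (\<forall>i<n. u i = v i) \<Longrightarrow> p u = p v"
  by (induction rule: polyfun.induct) simp_all

lemma pf_subst: "polyfun m p \<Longrightarrow> (\<And>i. i < m \<Longrightarrow> polyfun n (q i)) \<Longrightarrow> polyfun n (\<lambda>v. p (\<lambda>i. q i v))"
proof (induction rule: polyfun.induct)
  case (pconst c) show ?case by (rule pf_const)
next
  case (pvar i) then show ?case by simp
next
  case (padd p q) then show ?case by (intro pf_add) blast+
next
  case (pmult p q) then show ?case by (intro pf_mult) blast+
qed

lemma pf_upd: "polyfun n p \<Longrightarrow> polyfun n (\<lambda>u. p (u(i:=c)))"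
proof (induction rule: polyfun.induct)
  case (pconst c) show ?case by (rule pf_const)
next
  case (pvar j) then show ?case by (cases "j = i") (auto intro: pf_const pf_var)
next
  case (padd p q) then show ?case by (intro pf_add) blast+
next
  case (pmult p q) then show ?case by (intro pf_mult) blast+
qed

lemma pf_univ: "polyfun n p \<Longrightarrow> \<exists>P. \<forall>z. p (t(i:=z)) = poly P z"
proof (induction rule: polyfun.induct)
  case (pconst c) then show ?case by (intro exI[of _ "[:c:]"]) simp
next
  case (pvar j)
  show ?case
  proof (cases "j = i")
    case True then show ?thesis by (intro exI[of _ "[:0,1:]"]) simp
  next
    case False then show ?thesis by (intro exI[of _ "[:t j:]"]) simp
  qed
next
  case (padd p q)
  then obtain P Q where "\<forall>z. p (t(i:=z)) = poly P z" "\<forall>z. q (t(i:=z)) = poly Q z" by blast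
  then show ?case by (intro exI[of _ "P + Q"]) (simp add: fun_upd_def)
next
  case (pmult p q)
  then obtain P Q where "\<forall>z. p (t(i:=z)) = poly P z" "\<forall>z. q (t(i:=z)) = poly Q z" by blast
  then show ?case by (intro exI[of _ "P * Q"]) (simp add: fun_upd_def)
qed

lemma pf_fe:
  assumes "polyfun n p" "finite {z. p (t(i:=z)) \<noteq> 0}"
  shows "p t = 0"
proof -
  obtain P where P: "\<forall>z. p (t(i:=z)) = poly P z" using pf_univ[OF assms(1)] by blast
  have "P = 0"
  proof (rule ccontr)
    assume "P \<noteq> 0"
    then have "finite {z. poly P z = 0}" by (rule poly_roots_finite)
    moreover have "finite {z. poly P z \<noteq> 0}" using assms(2) P by simp
    ultimately have "finite ({z. poly P z = 0} \<union> {z. poly P z \<noteq> 0})" by simp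
    moreover have "{z. poly P z = 0} \<union> {z. poly P z \<noteq> 0} = (UNIV :: complex set)" by blast
    ultimately have "finite (UNIV :: complex set)" by simp
    then show False using infinite_UNIV_char_0 by blast
  qed
  then have "\<forall>z. p (t(i := z)) = 0" using P by simp
  then show ?thesis by (metis fun_upd_triv)
qed

lemma pf_sub0: "polyfun n p \<Longrightarrow> \<exists>q. polyfun n q \<and> (\<forall>u. p u = p (u(i:=0)) + u i * q u)"
proof (induction rule: polyfun.induct)
  case (pconst c) then show ?case by (intro exI[of _ "\<lambda>v. 0"]) (simp add: pf_const)
next
  case (pvar j)
  show ?case
  proof (cases "j = i")
    case True then show ?thesis by (intro exI[of _ "\<lambda>v. 1"]) (simp add: pf_const)
  next
    case False then show ?thesis by (intro exI[of _ "\<lambda>v. 0"]) (simp add: pf_const)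
  qed
next
  case (padd p q)
  obtain a where a: "polyfun n a" "\<forall>u. p u = p (u(i:=0)) + u i * a u" using padd.IH(1) by blast
  obtain b where b: "polyfun n b" "\<forall>u. q u = q (u(i:=0)) + u i * b u" using padd.IH(2) by blast
  note ab = a b
  show ?case
  proof (intro exI[of _ "\<lambda>u. a u + b u"] conjI allI)
    show "polyfun n (\<lambda>u. a u + b u)" by (rule pf_add[OF a(1) b(1)])
    fix u
    note e1 = ab(2)[rule_format, of u] and e2 = ab(4)[rule_format, of u]
    show "p u + q u = p (u(i := 0)) + q (u(i := 0)) + u i * (a u + b u)"
      apply (subst e1, subst e2) by (simp add: algebra_simps)
  qed
next
  case (pmult p q)
  obtain a where a: "polyfun n a" "\<forall>u. p u = p (u(i:=0)) + u i * a u" using pmult.IH(1) by blast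
  obtain b where b: "polyfun n b" "\<forall>u. q u = q (u(i:=0)) + u i * b u" using pmult.IH(2) by blast
  show ?case
  proof (intro exI[of _ "\<lambda>u. a u * q u + p (u(i:=0)) * b u"] conjI allI)
    show "polyfun n (\<lambda>u. a u * q u + p (u(i:=0)) * b u)"
      by (rule pf_add[OF pf_mult[OF a(1) pmult.hyps(2)] pf_mult[OF pf_upd[OF pmult.hyps(1)] b(1)]])
    fix u
    note e1 = a(2)[rule_format, of u] and e2 = b(2)[rule_format, of u]
    show "p u * q u = p (u(i := 0)) * q (u(i := 0)) + u i * (a u * q u + p (u(i := 0)) * b u)"
      apply (subst e1, subst (1 2) e2) by (simp add: algebra_simps)
  qed
qed

definition "Kq u = u 5 ^ 2 + 4 * u 3 * u (4::nat)"

lemma pf_qdiv: "polyfun 6 p \<Longrightarrow> \<exists>R A B. polyfun 6 R \<and> polyfun 6 A \<and> polyfun 6 B \<and>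
   (\<forall>u z. A (u(5:=z)) = A u) \<and> (\<forall>u z. B (u(5:=z)) = B u) \<and>
   (\<forall>u. p u = Kq u * R u + A u + u 5 * B u)"
proof (induction rule: polyfun.induct)
  case (pconst c) show ?case
    by (rule exI[of _ "\<lambda>v. 0"], rule exI[of _ "\<lambda>v. c"], rule exI[of _ "\<lambda>v. 0"]) (simp add: pf_const)
next
  case (pvar j)
  show ?case
  proof (cases "j = 5")
    case True show ?thesis
      by (rule exI[of _ "\<lambda>v. 0"], rule exI[of _ "\<lambda>v. 0"], rule exI[of _ "\<lambda>v. 1"]) (simp add: pf_const True)
  next
    case False show ?thesis
      by (rule exI[of _ "\<lambda>v. 0"], rule exI[of _ "\<lambda>v. v j"], rule exI[of _ "\<lambda>v. 0"]) (simp add: pf_const pf_var False pvar)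
  qed
next
  case (padd p q)
  obtain R1 A1 B1 where 1: "polyfun 6 R1" "polyfun 6 A1" "polyfun 6 B1"
   "\<forall>u z. A1 (u(5:=z)) = A1 u" "\<forall>u z. B1 (u(5:=z)) = B1 u" "\<forall>u. p u = Kq u * R1 u + A1 u + u 5 * B1 u"
    using padd.IH(1) by blast
  obtain R2 A2 B2 where 2: "polyfun 6 R2" "polyfun 6 A2" "polyfun 6 B2"
   "\<forall>u z. A2 (u(5:=z)) = A2 u" "\<forall>u z. B2 (u(5:=z)) = B2 u" "\<forall>u. q u = Kq u * R2 u + A2 u + u 5 * B2 u"
    using padd.IH(2) by blast
  show ?case
  proof (rule exI[of _ "\<lambda>v. R1 v + R2 v"], rule exI[of _ "\<lambda>v. A1 v + A2 v"], rule exI[of _ "\<lambda>v. B1 v + B2 v"], intro conjI allI)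
    show "polyfun 6 (\<lambda>v. R1 v + R2 v)" by (rule pf_add[OF 1(1) 2(1)])
    show "polyfun 6 (\<lambda>v. A1 v + A2 v)" by (rule pf_add[OF 1(2) 2(2)])
    show "polyfun 6 (\<lambda>v. B1 v + B2 v)" by (rule pf_add[OF 1(3) 2(3)])
    fix u
    show "\<And>z. A1 (u(5:=z)) + A2 (u(5:=z)) = A1 u + A2 u" using 1(4) 2(4) by simp
    show "\<And>z. B1 (u(5:=z)) + B2 (u(5:=z)) = B1 u + B2 u" using 1(5) 2(5) by simp
    note e1 = 1(6)[rule_format, of u] and e2 = 2(6)[rule_format, of u]
    show "p u + q u = Kq u * (R1 u + R2 u) + (A1 u + A2 u) + u 5 * (B1 u + B2 u)"
      apply (subst e1, subst e2) by (simp add: algebra_simps)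
  qed
next
  case (pmult p q)
  obtain R1 A1 B1 where 1: "polyfun 6 R1" "polyfun 6 A1" "polyfun 6 B1"
   "\<forall>u z. A1 (u(5:=z)) = A1 u" "\<forall>u z. B1 (u(5:=z)) = B1 u" "\<forall>u. p u = Kq u * R1 u + A1 u + u 5 * B1 u"
    using pmult.IH(1) by blast
  obtain R2 A2 B2 where 2: "polyfun 6 R2" "polyfun 6 A2" "polyfun 6 B2"
   "\<forall>u z. A2 (u(5:=z)) = A2 u" "\<forall>u z. B2 (u(5:=z)) = B2 u" "\<forall>u. q u = Kq u * R2 u + A2 u + u 5 * B2 u"
    using pmult.IH(2) by blast
  have v3: "polyfun 6 (\<lambda>v. v 3)" and v4: "polyfun 6 (\<lambda>v. v 4)" and v5: "polyfun 6 (\<lambda>v. v 5)"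
    by (auto intro!: pf_var)
  have c4: "polyfun 6 (\<lambda>v. 4 * v 3 * v 4)" by (rule pf_mult[OF pf_mult[OF pf_const v3] v4])
  show ?case
  proof (rule exI[of _ "\<lambda>v. R1 v * q v + (A1 v + v 5 * B1 v) * R2 v + B1 v * B2 v"], rule exI[of _ "\<lambda>v. A1 v * A2 v - 4 * v 3 * v 4 * (B1 v * B2 v)"], rule exI[of _ "\<lambda>v. A1 v * B2 v + A2 v * B1 v"], intro conjI allI)
    show "polyfun 6 (\<lambda>v. R1 v * q v + (A1 v + v 5 * B1 v) * R2 v + B1 v * B2 v)"
      by (rule pf_add[OF pf_add[OF pf_mult[OF 1(1) pmult.hyps(2)] pf_mult[OF pf_add[OF 1(2) pf_mult[OF v5 1(3)]] 2(1)]] pf_mult[OF 1(3) 2(3)]])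
    show "polyfun 6 (\<lambda>v. A1 v * A2 v - 4 * v 3 * v 4 * (B1 v * B2 v))"
      by (rule pf_diff[OF pf_mult[OF 1(2) 2(2)] pf_mult[OF c4 pf_mult[OF 1(3) 2(3)]]])
    show "polyfun 6 (\<lambda>v. A1 v * B2 v + A2 v * B1 v)"
      by (rule pf_add[OF pf_mult[OF 1(2) 2(3)] pf_mult[OF 2(2) 1(3)]])
    fix u
    show "\<And>z. A1 (u(5:=z)) * A2 (u(5:=z)) - 4 * (u(5:=z)) 3 * (u(5:=z)) 4 * (B1 (u(5:=z)) * B2 (u(5:=z)))
        = A1 u * A2 u - 4 * u 3 * u 4 * (B1 u * B2 u)" using 1(4,5) 2(4,5) by simp
    show "\<And>z. A1 (u(5:=z)) * B2 (u(5:=z)) + A2 (u(5:=z)) * B1 (u(5:=z)) = A1 u * B2 u + A2 u * B1 u"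
      using 1(4,5) 2(4,5) by simp
    note e1 = 1(6)[rule_format, of u] and e2 = 2(6)[rule_format, of u]
    show "p u * q u = Kq u * (R1 u * q u + (A1 u + u 5 * B1 u) * R2 u + B1 u * B2 u) +
        (A1 u * A2 u - 4 * u 3 * u 4 * (B1 u * B2 u)) + u 5 * (A1 u * B2 u + A2 u * B1 u)"
      apply (subst e1, subst (1 2) e2) unfolding Kq_def by algebra
  qed
qed



lemma m2: "(vector [vector [a11,a12], vector [a21,a22]] :: 'a::{comm_ring_1}^2^2)
 ** (vector [vector [b11,b12], vector [b21,b22]] :: 'a^2^2) =
 vector [vector [a11*b11+a12*b21, a11*b12+a12*b22], vector [a21*b11+a22*b21, a21*b12+a22*b22]]"
  unfolding vec_eq_iff matrix_matrix_mult_def by (simp add: forall_2 sum_2)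

lemma mat1_2: "(mat 1 :: 'a::comm_ring_1^2^2) = vector [vector [1,0], vector [0,1]]"
  unfolding vec_eq_iff mat_def by (simp add: forall_2)

lemma M2: "(g::'a::comm_ring_1^2^2) = vector [vector [g$1$1,g$1$2], vector [g$2$1,g$2$2]]"
  unfolding vec_eq_iff by (simp add: forall_2)

lemma minv2: assumes "det g = 1" shows "minv g = adj2 g"
proof (rule minv_eq)
  have d: "g$1$1 * g$2$2 - g$1$2 * g$2$1 = 1" using assms by (simp add: det_2)
  show "g ** adj2 g = mat 1"
    apply (subst M2[of g]) using d by (simp add: adj2_def m2 mat1_2 algebra_simps)
  show "adj2 g ** g = mat 1"
    apply (subst (2) M2[of g]) using d by (simp add: adj2_def m2 mat1_2 algebra_simps)
qed

lemma adj2_adj2: "adj2 (adj2 g) = g"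
  unfolding adj2_def vec_eq_iff by (simp add: forall_2)

lemma det_adj2: "det (adj2 g) = det g"
  by (simp add: adj2_def det_2 algebra_simps)

lemma trace_act: "det g = 1 \<Longrightarrow> trace (act g M) = trace M"
  apply (simp add: act_explicit iota_def adj2_def m3 tr3 det_2)
  by algebra

lemma act_sl3: "det g = 1 \<Longrightarrow> M \<in> sl3 \<Longrightarrow> act g M \<in> sl3"
  by (simp add: sl3_def trace_act)

lemma Ivec_act: "det g = 1 \<Longrightarrow> Ivec (act g M) = Ivec M"
  by (simp add: Ivec_def I1_act I2_act I3_act I4_act I5_act I6_act)

lemma act_fun_eq: "g \<in> SL2 \<Longrightarrow> act_fun g f M = f (act (adj2 g) M)"
  by (simp add: act_fun_def SL2_def minv2)

lemma det_adj2_1: "g \<in> SL2 \<Longrightarrow> det (adj2 g) = 1"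
  by (simp add: SL2_def det_adj2)

definition Jv :: "(nat \<Rightarrow> complex) \<Rightarrow> nat \<Rightarrow> complex" where
  "Jv t = (\<lambda>i. [t 7, t 6 ^ 2 + 4 * t 0 * t 1, t 2 * t 3 + t 4 * t 5,
      t 6 * t 3 * t 5 + t 1 * t 3 ^ 2 - t 0 * t 5 ^ 2,
      t 6 * t 2 * t 4 + t 0 * t 2 ^ 2 - t 4 ^ 2 * t 1,
      t 6 * (t 2 * t 3 - t 4 * t 5) - 2 * (t 1 * t 3 * t 4 + t 0 * t 2 * t 5)] ! i)"

lemma Ivec_Jv: "Ivec M = Jv (coords M)"
  by (simp add: Ivec_def Jv_def coords_def I1_def I2_def I3_def I4_def I5_def I6_def)

lemma Jv_local: assumes "\<forall>i<8. t i = t' i" shows "Jv t = Jv t'"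
proof -
  have "t 0 = t' 0" "t 1 = t' 1" "t 2 = t' 2" "t 3 = t' 3" "t 4 = t' 4" "t 5 = t' 5" "t 6 = t' 6" "t 7 = t' 7"
    using assms by auto
  then show ?thesis by (simp add: Jv_def)
qed

lemma less6: "i < (6::nat) \<Longrightarrow> i = 0 \<or> i = 1 \<or> i = 2 \<or> i = 3 \<or> i = 4 \<or> i = 5" by arith
lemma less8: "i < (8::nat) \<Longrightarrow> i = 0 \<or> i = 1 \<or> i = 2 \<or> i = 3 \<or> i = 4 \<or> i = 5 \<or> i = 6 \<or> i = 7" by arith

lemma pf_Jv: assumes "i < 6" shows "polyfun 8 (\<lambda>t. Jv t i)"
proof -
  have v: "\<And>k. k < 8 \<Longrightarrow> polyfun 8 (\<lambda>t. t k)" by (rule pf_var)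
  note r = pf_add pf_mult pf_diff pf_pow pf_const
  show ?thesis using less6[OF assms]
    apply (elim disjE)
    apply (simp_all add: Jv_def)
    apply (intro r v; simp)+
    done
qed

definition mk :: "(nat \<Rightarrow> complex) \<Rightarrow> complex^3^3" where
  "mk t = vector [vector [t 7 / 3 + t 6 / 2, t 0, t 4], vector [t 1, t 7 / 3 - t 6 / 2, t 2],
     vector [t 5, t 3, - 2 * t 7 / 3]]"

lemma mk_sl3: "mk t \<in> sl3"
  by (simp add: sl3_def mk_def tr3)

lemma coords_mk: "\<forall>i<8. coords (mk t) i = t i"
proof (intro allI impI)
  fix i :: nat assume "i < 8"
  then show "coords (mk t) i = t i" using less8[OF \<open>i<8\<close>]
    by (auto simp: coords_def mk_def x1_def y1_def x2_def y2_def x3_def y3_def h1_def h0_def field_simps)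
qed

lemma relation: "Jv t 5 ^ 2 + 4 * Jv t 3 * Jv t 4 = Jv t 1 * Jv t 2 ^ 2"
  by (simp add: Jv_def) algebra



lemma pf_clear:
  assumes "polyfun n p" "\<And>i. i < n \<Longrightarrow> polyfun m (a i)" "polyfun m w"
    "\<And>u i. i < n \<Longrightarrow> w u \<noteq> 0 \<Longrightarrow> \<sigma> u i = a i u / w u ^ K"
  shows "\<exists>N Q. polyfun m Q \<and> (\<forall>u. w u \<noteq> 0 \<longrightarrow> p (\<sigma> u) * w u ^ N = Q u)"
  using assms(1)
proof (induction rule: polyfun.induct)
  case (pconst c) show ?case
    by (rule exI[of _ 0], rule exI[of _ "\<lambda>u. c"]) (simp add: pf_const)
next
  case (pvar i) show ?case
    by (rule exI[of _ K], rule exI[of _ "a i"]) (simp add: assms(2,4) pvar)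
next
  case (padd p q)
  obtain N1 Q1 where 1: "polyfun m Q1" "\<forall>u. w u \<noteq> 0 \<longrightarrow> p (\<sigma> u) * w u ^ N1 = Q1 u" using padd.IH(1) by blast
  obtain N2 Q2 where 2: "polyfun m Q2" "\<forall>u. w u \<noteq> 0 \<longrightarrow> q (\<sigma> u) * w u ^ N2 = Q2 u" using padd.IH(2) by blast
  show ?case
  proof (rule exI[of _ "N1 + N2"], rule exI[of _ "\<lambda>u. Q1 u * w u ^ N2 + Q2 u * w u ^ N1"], intro conjI allI impI)
    show "polyfun m (\<lambda>u. Q1 u * w u ^ N2 + Q2 u * w u ^ N1)"
      by (rule pf_add[OF pf_mult[OF 1(1) pf_pow[OF assms(3)]] pf_mult[OF 2(1) pf_pow[OF assms(3)]]])
    fix u assume "w u \<noteq> 0"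
    then have e1: "Q1 u = p (\<sigma> u) * w u ^ N1" and e2: "Q2 u = q (\<sigma> u) * w u ^ N2" using 1 2 by auto
    show "(p (\<sigma> u) + q (\<sigma> u)) * w u ^ (N1 + N2) = Q1 u * w u ^ N2 + Q2 u * w u ^ N1"
      unfolding e1 e2 by (simp add: algebra_simps power_add)
  qed
next
  case (pmult p q)
  obtain N1 Q1 where 1: "polyfun m Q1" "\<forall>u. w u \<noteq> 0 \<longrightarrow> p (\<sigma> u) * w u ^ N1 = Q1 u" using pmult.IH(1) by blast
  obtain N2 Q2 where 2: "polyfun m Q2" "\<forall>u. w u \<noteq> 0 \<longrightarrow> q (\<sigma> u) * w u ^ N2 = Q2 u" using pmult.IH(2) by blast
  show ?case
  proof (rule exI[of _ "N1 + N2"], rule exI[of _ "\<lambda>u. Q1 u * Q2 u"], intro conjI allI impI)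
    show "polyfun m (\<lambda>u. Q1 u * Q2 u)" by (rule pf_mult[OF 1(1) 2(1)])
    fix u assume "w u \<noteq> 0"
    then have e1: "Q1 u = p (\<sigma> u) * w u ^ N1" and e2: "Q2 u = q (\<sigma> u) * w u ^ N2" using 1 2 by auto
    show "(p (\<sigma> u) * q (\<sigma> u)) * w u ^ (N1 + N2) = Q1 u * Q2 u"
      unfolding e1 e2 by (simp add: algebra_simps power_add)
  qed
qed

definition sig :: "(nat \<Rightarrow> complex) \<Rightarrow> nat \<Rightarrow> complex" where
  "sig u = (\<lambda>i. [- u 3 / u 2 ^ 2, - u 4, 0, 0, 1, u 2, - u 5 / u 2, u 0] ! i)"

definition siga :: "nat \<Rightarrow> (nat \<Rightarrow> complex) \<Rightarrow> complex" where
  "siga i u = [- u 3, - u 4 * u 2 ^ 2, 0, 0, u 2 ^ 2, u 2 ^ 3, - u 5 * u 2, u 0 * u 2 ^ 2] ! i"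

lemma siga_pf: "i < 8 \<Longrightarrow> polyfun 6 (siga i)"
proof -
  assume i: "i < 8"
  have v: "\<And>k. k < 6 \<Longrightarrow> polyfun 6 (\<lambda>t. t k)" by (rule pf_var)
  note r = pf_add pf_mult pf_diff pf_pow pf_const pf_neg
  have e: "siga i = (\<lambda>u. siga i u)" by simp
  show ?thesis using less8[OF i]
    apply (elim disjE)
    apply (simp_all add: siga_def[abs_def])
    apply (intro r v; simp)+
    done
qed

lemma siga_eq: "i < 8 \<Longrightarrow> u 2 \<noteq> 0 \<Longrightarrow> sig u i = siga i u / u 2 ^ 2"
  using less8[of i] by (auto simp: sig_def siga_def field_simps power2_eq_square power3_eq_cube)

lemma clear_sig: "polyfun 8 p \<Longrightarrow> \<exists>N Q. polyfun 6 Q \<and> (\<forall>u. u 2 \<noteq> 0 \<longrightarrow> p (sig u) * u 2 ^ N = Q u)"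
  by (rule pf_clear[where a = siga and K = 2]) (auto intro: siga_pf pf_var siga_eq)



lemma inv_act: assumes "invariant f" "det h = 1" "M \<in> sl3" shows "f (act h M) = f M"
proof -
  have g: "adj2 h \<in> SL2" using assms(2) by (simp add: SL2_def det_adj2)
  have "act_fun (adj2 h) f M = f M" using assms(1,3) g by (simp add: invariant_def)
  then show ?thesis using g by (simp add: act_fun_eq adj2_adj2)
qed

lemma slice:
  assumes inv: "invariant f" and fp: "\<forall>M\<in>sl3. f M = p (coords M)" and pp: "polyfun 8 p"
    and M: "M \<in> sl3" and s0: "I3 M \<noteq> 0"
  shows "f M = p (sig (Ivec M))"
proof -
  define s where "s = I3 M"
  have s: "s = M$2$3 * M$3$2 + M$1$3 * M$3$1" "s \<noteq> 0" using s0 by (simp_all add: s_def I3_def x2_def y2_def x3_def y3_def)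
  define h :: "complex^2^2" where "h = vector [vector [M$3$1/s, M$3$2/s], vector [-M$2$3, M$1$3]]"
  have "det h = (M$1$3*M$3$1 + M$2$3*M$3$2) / s" using s(2) by (simp add: h_def det_2 field_simps)
  also have "\<dots> = 1" using s by (simp add: algebra_simps)
  finally have dh: "det h = 1" .
  define N where "N = act h M"
  have fN: "f N = f M" unfolding N_def by (rule inv_act[OF inv dh M])
  have NS: "N \<in> sl3" unfolding N_def by (rule act_sl3[OF dh M])
  have NE: "N = iota h ** (vector [vector [M$1$1,M$1$2,M$1$3], vector [M$2$1,M$2$2,M$2$3], vector [M$3$1,M$3$2,M$3$3]]) ** iota (adj2 h)"
    by (simp add: N_def act_explicit[OF dh])
  have z12: "N$2$3 = 0" "N$3$2 = 0"
    unfolding NE by (simp_all add: iota_def adj2_def m3 h_def algebra_simps)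
  have "N$1$3 = M$3$1/s * M$1$3 + M$3$2/s * M$2$3"
    unfolding NE by (simp add: iota_def adj2_def m3 h_def)
  also have "\<dots> = (M$2$3 * M$3$2 + M$1$3 * M$3$1) / s" using s(2) by (simp add: field_simps)
  also have "\<dots> = 1" using s(2) by (simp only: s(1)[symmetric]) simp
  finally have z: "N$2$3 = 0" "N$3$2 = 0" "N$1$3 = 1" using z12 by simp_all
  have IN: "I1 N = I1 M" "I3 N = I3 M" "I4 N = I4 M" "I5 N = I5 M" "I6 N = I6 M"
    unfolding N_def using dh by (simp_all add: I1_act I3_act I4_act I5_act I6_act)
  have y3: "N$3$1 = s" using IN(2) z by (simp add: s_def I3_def x2_def y2_def x3_def y3_def)
  have c: "\<forall>i<8. coords N i = sig (Ivec M) i"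
  proof (intro allI impI)
    fix i :: nat assume "i < 8"
    then show "coords N i = sig (Ivec M) i" using less8[OF \<open>i < 8\<close>]
      apply (elim disjE)
      apply (simp_all add: coords_def sig_def Ivec_def flip: IN s_def)
      using z y3 s(2) by (simp_all add: I1_def I3_def I4_def I5_def I6_def x1_def y1_def x2_def y2_def x3_def y3_def h1_def h0_def field_simps power2_eq_square)
  qed
  have "f M = p (coords N)" using fN fp NS by simp
  also have "\<dots> = p (sig (Ivec M))" by (rule pf_local[OF pp c])
  finally show ?thesis .
qed



lemma I3_Ivec: "Ivec M 2 = I3 M" by (simp add: Ivec_def)

lemma ext_all:
  assumes fp: "\<forall>M\<in>sl3. f M = p (coords M)" and pp: "polyfun 8 p" and pQ: "polyfun 6 Q"
    and gen: "\<forall>M\<in>sl3. I3 M \<noteq> 0 \<longrightarrow> f M * I3 M ^ N = Q (Ivec M)"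
  shows "\<forall>M\<in>sl3. f M * I3 M ^ N = Q (Ivec M)"
proof -
  define D where "D t = p t * Jv t 2 ^ N - Q (Jv t)" for t
  have pJ: "polyfun 8 (\<lambda>v. Q (Jv v))" using pf_subst[OF pQ pf_Jv, of id] by simp
  have j2: "polyfun 8 (\<lambda>t. Jv t 2)" by (rule pf_Jv) simp
  have pD: "polyfun 8 (\<lambda>t. p t * Jv t 2 ^ N - Q (Jv t))"
    by (rule pf_diff[OF pf_mult[OF pp pf_pow[OF j2]] pJ])
  then have pD: "polyfun 8 D" unfolding D_def by simp
  have D0: "D t = 0" if "Jv t 2 \<noteq> 0" for t
  proof -
    define M where "M = mk t"
    have cm: "\<forall>i<8. coords M i = t i" unfolding M_def by (rule coords_mk)
    have MS: "M \<in> sl3" unfolding M_def by (rule mk_sl3)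
    have "p t = p (coords M)" by (rule pf_local[OF pp]) (simp add: cm)
    also have "\<dots> = f M" using fp MS by simp
    finally have pt: "p t = f M" .
    have jt: "Jv t = Ivec M" unfolding Ivec_Jv by (rule Jv_local[OF cm, symmetric])
    have "I3 M = Jv t 2" by (simp only: I3_Ivec[symmetric] jt)
    then have "I3 M \<noteq> 0" using that by simp
    then have "f M * I3 M ^ N = Q (Ivec M)" using gen MS by blast
    then show ?thesis unfolding D_def pt jt I3_Ivec by simp
  qed
  have D1: "D t = 0" if "t 5 \<noteq> 0" for t
  proof (rule pf_fe[OF pD, of t 4])
    have "{z. D (t(4 := z)) \<noteq> 0} \<subseteq> {- (t 2 * t 3) / t 5}"
    proof
      fix z assume "z \<in> {z. D (t(4 := z)) \<noteq> 0}"
      then have nz: "D (t(4 := z)) \<noteq> 0" by simp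
      have "Jv (t(4 := z)) 2 = 0"
      proof (rule ccontr)
        assume "Jv (t(4 := z)) 2 \<noteq> 0"
        then have "D (t(4 := z)) = 0" by (rule D0)
        then show False using nz by simp
      qed
      then have "t 2 * t 3 + z * t 5 = 0" by (simp add: Jv_def)
      then have "z * t 5 = - (t 2 * t 3)" by (simp add: eq_neg_iff_add_eq_0 add.commute)
      then show "z \<in> {- (t 2 * t 3) / t 5}" using that by (simp add: field_simps)
    qed
    then show "finite {z. D (t(4 := z)) \<noteq> 0}" by (rule finite_subset) simp
  qed
  have D2: "D t = 0" for t
  proof (rule pf_fe[OF pD, of t 5])
    have "{z. D (t(5 := z)) \<noteq> 0} \<subseteq> {0}"
    proof
      fix z assume "z \<in> {z. D (t(5 := z)) \<noteq> 0}"
      then have "D (t(5 := z)) \<noteq> 0" by simp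
      then have "z = 0" using D1[of "t(5 := z)"] by auto
      then show "z \<in> {0}" by simp
    qed
    then show "finite {z. D (t(5 := z)) \<noteq> 0}" by (rule finite_subset) simp
  qed
  show ?thesis
  proof
    fix M assume MS: "M \<in> sl3"
    have "D (coords M) = 0" by (rule D2)
    then show "f M * I3 M ^ N = Q (Ivec M)"
      using fp MS by (simp add: D_def Ivec_Jv[symmetric] I3_Ivec)
  qed
qed

lemma vpt:
  assumes "u 2 = 0" "u 4 \<noteq> 0" "u 5 ^ 2 + 4 * u 3 * u 4 = 0"
  shows "\<exists>M\<in>sl3. I3 M = 0 \<and> (\<forall>i<6. Ivec M i = u i)"
proof -
  define t where "t = (\<lambda>i. [- u 1 / (4 * u 4), - u 4, 0, u 5 / (2 * u 4), 1, 0, 0, u 0] ! i)"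
  define M where "M = mk t"
  have MS: "M \<in> sl3" unfolding M_def by (rule mk_sl3)
  have jt: "Ivec M = Jv t" unfolding Ivec_Jv M_def by (rule Jv_local[OF coords_mk])
  have u3: "u 3 = - (u 5 ^ 2) / (4 * u 4)" using assms(2,3) by (simp add: field_simps add_eq_0_iff)
  have e: "\<forall>i<6. Jv t i = u i"
  proof (intro allI impI)
    fix i :: nat assume "i < 6"
    then show "Jv t i = u i" using less6[OF \<open>i < 6\<close>] assms(1,2) u3
      apply (elim disjE) apply (simp_all add: Jv_def t_def)
    apply (simp add: power_divide power_mult_distrib field_simps power2_eq_square)
    done
  qed
  show ?thesis
  proof (rule bexI[OF _ MS], intro conjI)
    show "\<forall>i<6. Ivec M i = u i" using e jt by simp
    show "I3 M = 0" using e jt assms(1) by (simp flip: I3_Ivec)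
  qed
qed

lemma zero34:
  assumes "polyfun 6 \<phi>" "\<And>u. u 3 \<noteq> 0 \<Longrightarrow> u 4 \<noteq> 0 \<Longrightarrow> \<phi> u = 0"
  shows "\<phi> u = 0"
proof -
  have z1: "\<phi> v = 0" if "v 4 \<noteq> 0" for v
  proof (rule pf_fe[OF assms(1), of v 3])
    have "{z. \<phi> (v(3 := z)) \<noteq> 0} \<subseteq> {0}"
    proof
      fix z assume "z \<in> {z. \<phi> (v(3 := z)) \<noteq> 0}"
      then have "\<phi> (v(3 := z)) \<noteq> 0" by simp
      then have "z = 0" using assms(2)[of "v(3 := z)"] that by auto
      then show "z \<in> {0}" by simp
    qed
    then show "finite {z. \<phi> (v(3 := z)) \<noteq> 0}" by (rule finite_subset) simp
  qed
  show ?thesis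
  proof (rule pf_fe[OF assms(1), of u 4])
    have "{z. \<phi> (u(4 := z)) \<noteq> 0} \<subseteq> {0}"
    proof
      fix z assume "z \<in> {z. \<phi> (u(4 := z)) \<noteq> 0}"
      then have "\<phi> (u(4 := z)) \<noteq> 0" by simp
      then have "z = 0" using z1[of "u(4 := z)"] by auto
      then show "z \<in> {0}" by simp
    qed
    then show "finite {z. \<phi> (u(4 := z)) \<noteq> 0}" by (rule finite_subset) simp
  qed
qed



lemma Kq_Ivec: "Kq (Ivec M) = Ivec M 1 * Ivec M 2 ^ 2"
  unfolding Kq_def Ivec_Jv by (rule relation)

lemma down_step:
  assumes fp: "\<forall>M\<in>sl3. f M = p (coords M)" and pp: "polyfun 8 p" and pQ: "polyfun 6 Q"
    and full: "\<forall>M\<in>sl3. f M * I3 M ^ Suc N = Q (Ivec M)"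
  shows "\<exists>Q'. polyfun 6 Q' \<and> (\<forall>M\<in>sl3. f M * I3 M ^ N = Q' (Ivec M))"
proof -
  have Qz: "Q u = 0" if hz: "u 2 = 0" "u 4 \<noteq> 0" "u 5 ^ 2 + 4 * u 3 * u 4 = 0" for u
  proof -
    obtain M where M: "M \<in> sl3" "I3 M = 0" "\<forall>i<6. Ivec M i = u i" using vpt[OF hz] by blast
    have "Q u = Q (Ivec M)" by (rule pf_local[OF pQ]) (simp add: M(3))
    also have "\<dots> = 0" using full M(1,2) by (metis mult_zero_right power_0_Suc mult_zero_left)
    finally show ?thesis .
  qed
  define Q0 where "Q0 u = Q (u(2:=0))" for u
  have pQ0: "polyfun 6 Q0" unfolding Q0_def by (rule pf_upd[OF pQ])
  obtain R A B where RAB: "polyfun 6 R" "polyfun 6 A" "polyfun 6 B"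
    "\<forall>u z. A (u(5:=z)) = A u" "\<forall>u z. B (u(5:=z)) = B u" "\<forall>u. Q0 u = Kq u * R u + A u + u 5 * B u"
    using pf_qdiv[OF pQ0] by blast
  have AB0: "A (u(2:=0)) = 0 \<and> B (u(2:=0)) = 0" if "u 3 \<noteq> 0" "u 4 \<noteq> 0" for u
  proof -
    define r where "r = csqrt (- 4 * u 3 * u 4)"
    have r2: "r ^ 2 = - 4 * u 3 * u 4" unfolding r_def by simp
    have r0: "r \<noteq> 0" using that r2 by auto
    have side: "Q0 (u(2:=0, 5:=y)) = A (u(2:=0)) + y * B (u(2:=0))" if "y ^ 2 = - 4 * u 3 * u 4" for y
    proof -
      have "Q0 (u(2:=0, 5:=y)) = Kq (u(2:=0, 5:=y)) * R (u(2:=0, 5:=y)) + A (u(2:=0, 5:=y)) + y * B (u(2:=0, 5:=y))"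
        using RAB(6) by simp
      also have "Kq (u(2:=0, 5:=y)) = 0" using that by (simp add: Kq_def)
      also have "A (u(2:=0, 5:=y)) = A (u(2:=0))" using RAB(4) by blast
      also have "B (u(2:=0, 5:=y)) = B (u(2:=0))" using RAB(5) by blast
      also have "0 * R (u(2:=0, 5:=y)) + A (u(2:=0)) + y * B (u(2:=0)) = A (u(2:=0)) + y * B (u(2:=0))"
        by (simp only: mult_zero_left add_0)
      finally show ?thesis .
    qed
    have zero: "Q0 (u(2:=0, 5:=y)) = 0" if "y ^ 2 = - 4 * u 3 * u 4" for y
    proof -
      have "Q0 (u(2:=0, 5:=y)) = Q (u(2:=0, 5:=y))" unfolding Q0_def
        by (simp add: fun_upd_twist)
      also have "\<dots> = 0" by (rule Qz) (use that \<open>u 4 \<noteq> 0\<close> in simp_all)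
      finally show ?thesis .
    qed
    have "A (u(2:=0)) + r * B (u(2:=0)) = 0" using side[OF r2] zero[OF r2] by simp
    moreover have "A (u(2:=0)) + (- r) * B (u(2:=0)) = 0" using side[of "-r"] zero[of "-r"] r2 by simp
    ultimately have "2 * r * B (u(2:=0)) = 0" by algebra
    then have "B (u(2:=0)) = 0" using r0 by simp
    then show ?thesis using \<open>A (u(2:=0)) + r * B (u(2:=0)) = 0\<close> by simp
  qed
  have A0: "A (u(2:=0)) = 0" for u
    by (rule zero34[OF pf_upd[OF RAB(2)], of 2 0 u]) (use AB0 in blast)
  have B0: "B (u(2:=0)) = 0" for u
    by (rule zero34[OF pf_upd[OF RAB(3)], of 2 0 u]) (use AB0 in blast)
  obtain Q1 where Q1: "polyfun 6 Q1" "\<forall>u. Q u = Q (u(2:=0)) + u 2 * Q1 u"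
    using pf_sub0[OF pQ, of 2] by blast
  have Qdec: "Q u = Kq u * R (u(2:=0)) + u 2 * Q1 u" for u
  proof -
    have "Q (u(2:=0)) = Q0 (u(2:=0))" unfolding Q0_def by simp
    also have "\<dots> = Kq (u(2:=0)) * R (u(2:=0)) + A (u(2:=0)) + (u(2:=0)) 5 * B (u(2:=0))"
      using RAB(6) by blast
    also have "\<dots> = Kq u * R (u(2:=0))" using A0 B0 by (simp add: Kq_def)
    finally show ?thesis using Q1(2) by metis
  qed
  define Q' where "Q' u = u 1 * u 2 * R (u(2:=0)) + Q1 u" for u
  have pQ': "polyfun 6 Q'"
  proof -
    have v1: "polyfun 6 (\<lambda>u. u 1)" and v2: "polyfun 6 (\<lambda>u. u 2)" by (auto intro!: pf_var)
    have "polyfun 6 (\<lambda>u. u 1 * u 2 * R (u(2:=0)) + Q1 u)"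
      by (rule pf_add[OF pf_mult[OF pf_mult[OF v1 v2] pf_upd[OF RAB(1)]] Q1(1)])
    then show ?thesis unfolding Q'_def[abs_def] .
  qed
  have gen: "\<forall>M\<in>sl3. I3 M \<noteq> 0 \<longrightarrow> f M * I3 M ^ N = Q' (Ivec M)"
  proof (intro ballI impI)
    fix M assume MS: "M \<in> sl3" and s: "I3 M \<noteq> 0"
    have "I3 M * (f M * I3 M ^ N) = f M * I3 M ^ Suc N" by simp
    also have "\<dots> = Q (Ivec M)" using full MS by blast
    also have "\<dots> = I3 M * Q' (Ivec M)"
      unfolding Qdec Kq_Ivec Q'_def I3_Ivec by (simp add: algebra_simps power2_eq_square)
    finally show "f M * I3 M ^ N = Q' (Ivec M)" using s by simp
  qed
  show ?thesis using ext_all[OF fp pp pQ' gen] pQ' by blast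
qed

lemma down:
  assumes fp: "\<forall>M\<in>sl3. f M = p (coords M)" and pp: "polyfun 8 p"
  shows "polyfun 6 Q \<Longrightarrow> \<forall>M\<in>sl3. f M * I3 M ^ N = Q (Ivec M) \<Longrightarrow> \<exists>P. polyfun 6 P \<and> (\<forall>M\<in>sl3. f M = P (Ivec M))"
proof (induction N arbitrary: Q)
  case 0 then show ?case by auto
next
  case (Suc N)
  obtain Q' where "polyfun 6 Q'" "\<forall>M\<in>sl3. f M * I3 M ^ N = Q' (Ivec M)"
    using down_step[OF fp pp Suc.prems] by blast
  then show ?case using Suc.IH by blast
qed



lemma inv_I: "(I :: complex^3^3 \<Rightarrow> complex) \<in> {I1, I2, I3, I4, I5, I6} \<Longrightarrow> invariant I"
  unfolding invariant_def
  by (auto simp: act_fun_eq det_adj2_1 I1_act I2_act I3_act I4_act I5_act I6_act)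

theorem mainTheorem4:
  shows "(\<forall>I\<in>{I1, I2, I3, I4, I5, I6}. invariant I) \<and>
         (\<forall>f. (poly_sl3 f \<and> invariant f) \<longleftrightarrow>
              (\<exists>p. polyfun 6 p \<and> (\<forall>M\<in>sl3. f M = p (Ivec M))))"
proof (intro conjI allI ballI)
  fix I :: "complex^3^3 \<Rightarrow> complex" assume "I \<in> {I1, I2, I3, I4, I5, I6}"
  then show "invariant I" by (rule inv_I)
next
  fix f
  show "(poly_sl3 f \<and> invariant f) \<longleftrightarrow> (\<exists>p. polyfun 6 p \<and> (\<forall>M\<in>sl3. f M = p (Ivec M)))"
  proof
  assume H: "poly_sl3 f \<and> invariant f"
  then obtain p where pp: "polyfun 8 p" and fp: "\<forall>M\<in>sl3. f M = p (coords M)"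
    unfolding poly_sl3_def by blast
  have inv: "invariant f" using H by blast
  obtain N Q where pQ: "polyfun 6 Q" and NQ: "\<forall>u. u 2 \<noteq> 0 \<longrightarrow> p (sig u) * u 2 ^ N = Q u"
    using clear_sig[OF pp] by blast
  have gen: "\<forall>M\<in>sl3. I3 M \<noteq> 0 \<longrightarrow> f M * I3 M ^ N = Q (Ivec M)"
  proof (intro ballI impI)
    fix M assume MS: "M \<in> sl3" and s: "I3 M \<noteq> 0"
    have "f M = p (sig (Ivec M))" by (rule slice[OF inv fp pp MS s])
    moreover have "Ivec M 2 \<noteq> 0" using s by (simp add: I3_Ivec)
    ultimately show "f M * I3 M ^ N = Q (Ivec M)" using NQ by (metis I3_Ivec)
  qed
  show "\<exists>P. polyfun 6 P \<and> (\<forall>M\<in>sl3. f M = P (Ivec M))"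
    by (rule down[OF fp pp pQ ext_all[OF fp pp pQ gen]])
next
  assume "\<exists>p. polyfun 6 p \<and> (\<forall>M\<in>sl3. f M = p (Ivec M))"
  then obtain P where pP: "polyfun 6 P" and fP: "\<forall>M\<in>sl3. f M = P (Ivec M)" by blast
  have pJ: "polyfun 8 (\<lambda>v. P (Jv v))" using pf_subst[OF pP pf_Jv] by simp
  have "poly_sl3 f" unfolding poly_sl3_def
    using pJ fP by (auto simp: Ivec_Jv)
  moreover have "invariant f" unfolding invariant_def
  proof (intro ballI)
    fix g M assume g: "g \<in> SL2" and MS: "M \<in> sl3"
    have d: "det (adj2 g) = 1" using g by (rule det_adj2_1)
    have "act_fun g f M = f (act (adj2 g) M)" using g by (rule act_fun_eq)
    also have "\<dots> = P (Ivec (act (adj2 g) M))" using fP act_sl3[OF d MS] by blast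
    also have "\<dots> = P (Ivec M)" using d by (simp add: Ivec_act)
    also have "\<dots> = f M" using fP MS by simp
    finally show "act_fun g f M = f M" .
  qed
  ultimately show "poly_sl3 f \<and> invariant f" by blast
  qed
qed


end
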